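(* Let $Ab_0$ denote the class of all finite abelian groups, and define $f:Ab_0\to(0,\infty)$ by $f(G)=\frac{|\mathrm{Aut}(G)|}{|G|}$, where $\mathrm{Aut}(G)$ is the automorphism group of $G$. Then the set $\mathrm{Im}(f)\cap[0,1]$, where $\mathrm{Im}(f)=\{f(G)\mid G\in Ab_0\}$, is dense in $[0,1]$. *)

theory Defs
  imports "HOL-Analysis.Analysis" "HOL-Algebra.Bij"
begin

definition aut_ratio :: "('a, 'b) monoid_scheme \<Rightarrow> real" where
  "aut_ratio G = real (card (auto G)) / real (card (carrier G))"

text \<open>Image of f over all finite abelian groups. Every finite group is isomorphic
  to one whose carrier is a subset of nat, so carriers in nat cover all iso classes.\<close>
definition aut_ratio_image :: "real set" where
  "aut_ratio_image = {aut_ratio G | G :: nat monoid. comm_group G \<and> finite (carrier G)}"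

end

theory Submission
  imports Defs "HOL-Analysis.Harmonic_Numbers" "HOL-Number_Theory.Number_Theory"
begin

definition Zm :: "nat \<Rightarrow> nat monoid" where
  "Zm m = \<lparr>carrier = {..<m}, mult = (\<lambda>a b. (a + b) mod m), one = 0\<rparr>"

lemma Zm_comm_group: assumes "m > 0" shows "comm_group (Zm m)"
proof (rule comm_groupI)
  fix x y assume "x \<in> carrier (Zm m)" "y \<in> carrier (Zm m)"
  then show "x \<otimes>\<^bsub>Zm m\<^esub> y \<in> carrier (Zm m)" using assms by (simp add: Zm_def)
next
  show "\<one>\<^bsub>Zm m\<^esub> \<in> carrier (Zm m)" using assms by (simp add: Zm_def)
next
  fix x y z assume "x \<in> carrier (Zm m)" "y \<in> carrier (Zm m)" "z \<in> carrier (Zm m)"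
  have "((x + y) mod m + z) mod m = (x + (y + z) mod m) mod m"
    by (simp only: mod_add_left_eq mod_add_right_eq add.assoc)
  then show "x \<otimes>\<^bsub>Zm m\<^esub> y \<otimes>\<^bsub>Zm m\<^esub> z = x \<otimes>\<^bsub>Zm m\<^esub> (y \<otimes>\<^bsub>Zm m\<^esub> z)"
    by (simp add: Zm_def)
next
  fix x y assume "x \<in> carrier (Zm m)" "y \<in> carrier (Zm m)"
  show "x \<otimes>\<^bsub>Zm m\<^esub> y = y \<otimes>\<^bsub>Zm m\<^esub> x" by (simp add: Zm_def add.commute)
next
  fix x assume "x \<in> carrier (Zm m)"
  then show "\<one>\<^bsub>Zm m\<^esub> \<otimes>\<^bsub>Zm m\<^esub> x = x" by (simp add: Zm_def)
next
  fix x assume x: "x \<in> carrier (Zm m)"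
  have "((m - x) mod m + x) mod m = 0"
    by (simp only: mod_add_left_eq) (use x in \<open>simp add: Zm_def\<close>)
  then show "\<exists>y\<in>carrier (Zm m). y \<otimes>\<^bsub>Zm m\<^esub> x = \<one>\<^bsub>Zm m\<^esub>"
    using assms by (intro bexI[of _ "(m - x) mod m"]) (simp_all add: Zm_def)
qed

lemma Zm_phi_auto:
  assumes "m > 0" "a < m" "coprime a m"
  shows "(\<lambda>x\<in>{..<m}. a * x mod m) \<in> auto (Zm m)"
proof -
  let ?f = "\<lambda>x\<in>{..<m}. a * x mod m"
  have inj: "inj_on ?f {..<m}"
  proof (rule inj_onI)
    fix x y assume xy: "x \<in> {..<m}" "y \<in> {..<m}" "?f x = ?f y"
    then have "[a * x = a * y] (mod m)" by (simp add: cong_def)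
    then have "[x = y] (mod m)" using assms(3) by (metis cong_mult_lcancel_nat coprime_commute)
    then show "x = y" using xy by (simp add: cong_def)
  qed
  have img: "?f ` {..<m} \<subseteq> {..<m}" using assms by auto
  have "?f ` {..<m} = {..<m}" using endo_inj_surj[OF _ img inj] by simp
  then have "bij_betw ?f {..<m} {..<m}" using inj by (simp add: bij_betw_def)
  moreover have "?f \<in> hom (Zm m) (Zm m)"
  proof -
    have key: "a * ((x + y) mod m) mod m = (a * x mod m + a * y mod m) mod m" for x y
    proof -
      have "a * ((x + y) mod m) mod m = a * (x + y) mod m" by (rule mod_mult_right_eq)
      also have "\<dots> = (a * x + a * y) mod m" by (simp add: distrib_left)
      also have "\<dots> = (a * x mod m + a * y mod m) mod m" by (rule mod_add_eq[symmetric])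
      finally show ?thesis .
    qed
    have c1: "?f \<in> {..<m} \<rightarrow> {..<m}" using assms by auto
    have c2: "\<forall>x\<in>{..<m}. \<forall>y\<in>{..<m}. ?f ((x + y) mod m) = (?f x + ?f y) mod m"
    proof (intro ballI)
      fix x y assume "x \<in> {..<m}" "y \<in> {..<m}"
      moreover have "(x + y) mod m \<in> {..<m}" using assms by simp
      ultimately show "?f ((x + y) mod m) = (?f x + ?f y) mod m" by (simp only: restrict_apply' key)
    qed
    show ?thesis unfolding hom_def Zm_def using c1 c2 by simp
  qed
  ultimately show ?thesis by (simp add: auto_def Bij_def Zm_def)
qed

lemma double_mod_zero:
  fixes z m :: nat
  assumes "z = (z + z) mod m" "z < m"
  shows "z = 0"
proof (cases "z + z < m")
  case True
  then have "(z + z) mod m = z + z" by (rule mod_less)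
  then show ?thesis using assms(1) by linarith
next
  case False
  then have "(z + z) mod m = (z + z - m) mod m" by (intro le_mod_geq) linarith
  also have "\<dots> = z + z - m" using assms(2) by (intro mod_less) linarith
  finally show ?thesis using assms by linarith
qed

lemma Zm_mult: "x \<otimes>\<^bsub>Zm m\<^esub> y = (x + y) mod m"
  by (simp add: Zm_def)

lemma Zm_auto_char:
  assumes "m > 0" "h \<in> auto (Zm m)"
  shows "\<exists>a. a < m \<and> coprime a m \<and> h = (\<lambda>x\<in>{..<m}. a * x mod m)"
proof -
  have c: "carrier (Zm m) = {..<m}" by (simp add: Zm_def)
  have hom: "h \<in> hom (Zm m) (Zm m)" using assms(2) unfolding auto_def by blast
  have "h \<in> Bij (carrier (Zm m))" using assms(2) unfolding auto_def by blast
  then have "h \<in> Bij {..<m}" by (simp only: c)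
  then have bij: "bij_betw h {..<m} {..<m}" and ext: "h \<in> extensional {..<m}"
    unfolding Bij_def by blast+
  have "\<forall>x\<in>carrier (Zm m). \<forall>y\<in>carrier (Zm m). h (x \<otimes>\<^bsub>Zm m\<^esub> y) = h x \<otimes>\<^bsub>Zm m\<^esub> h y"
    using hom unfolding hom_def by blast
  then have "\<forall>x\<in>{..<m}. \<forall>y\<in>{..<m}. h ((x + y) mod m) = (h x + h y) mod m"
    by (simp only: c Zm_mult)
  then have hm: "\<And>x y. x < m \<Longrightarrow> y < m \<Longrightarrow> h ((x + y) mod m) = (h x + h y) mod m"
    by blast
  have hr: "\<And>x. x < m \<Longrightarrow> h x < m" using bij by (auto simp: bij_betw_def)
  define a where "a = h (1 mod m)"
  have am: "a < m" using hr assms(1) by (simp add: a_def)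
  have h0: "h 0 = 0"
  proof (rule double_mod_zero)
    have "h ((0 + 0) mod m) = (h 0 + h 0) mod m" using hm[of 0 0] assms(1) by blast
    moreover have "(0 + 0) mod m = (0::nat)" by simp
    ultimately show "h 0 = (h 0 + h 0) mod m" by metis
    show "h 0 < m" using hr[of 0] assms(1) by blast
  qed
  have hx: "x < m \<Longrightarrow> h x = a * x mod m" for x
  proof (induction x)
    case 0 then show ?case by (simp add: h0)
  next
    case (Suc x)
    then have m1: "1 < m" by linarith
    have "h (Suc x) = h ((x + 1 mod m) mod m)" using Suc.prems m1 by simp
    also have "\<dots> = (h x + a) mod m" using hm[of x "1 mod m"] Suc.prems m1 by (simp add: a_def)
    also have "\<dots> = (a * x mod m + a) mod m" using Suc by simp
    also have "\<dots> = a * Suc x mod m" by (simp add: mod_add_left_eq mod_add_right_eq add.commute)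
    finally show ?case .
  qed
  have "h = (\<lambda>x\<in>{..<m}. a * x mod m)"
  proof (rule extensionalityI[OF ext])
    show "(\<lambda>x\<in>{..<m}. a * x mod m) \<in> extensional {..<m}" by simp
    fix x assume "x \<in> {..<m}"
    then show "h x = (\<lambda>x\<in>{..<m}. a * x mod m) x" using hx by simp
  qed
  moreover have "coprime a m"
  proof -
    have surj: "h ` {..<m} = {..<m}" using bij by (rule bij_betw_imp_surj_on)
    have "1 mod m \<in> {..<m}" using assms(1) by simp
    then have "1 mod m \<in> h ` {..<m}" by (simp only: surj)
    then obtain x where xm: "x \<in> {..<m}" and hxe: "1 mod m = h x" by (rule imageE)
    have "a * x mod m = h x" using hx[of x] xm by simp
    then have "a * x mod m = 1 mod m" using hxe by (rule trans[OF _ sym])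
    then have eqx: "a * x mod m = 1 mod m" .
    have g1: "gcd (a * x) m = gcd m (a * x mod m)" by (rule gcd_red_nat)
    have g2: "gcd m (a * x mod m) = gcd m (1 mod m)" by (simp only: eqx)
    have g3: "gcd m (1 mod m) = gcd 1 m" by (rule gcd_red_nat[symmetric])
    have g4: "gcd 1 m = (1::nat)" by (subst gcd.commute) (rule gcd_1_nat)
    have "gcd (a * x) m = 1" by (simp only: g1 g2 g3 g4)
    then have "coprime (a * x) m" by (simp only: coprime_iff_gcd_eq_1)
    then show ?thesis using coprime_mult_left_iff by blast
  qed
  ultimately show ?thesis using am by blast
qed

lemma card_auto_Zm: assumes "m > 0" shows "card (auto (Zm m)) = totient m"
proof -
  let ?U = "{a. a < m \<and> coprime a m}"
  let ?phi = "\<lambda>a. (\<lambda>x\<in>{..<m}. a * x mod m)"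
  have inj: "inj_on ?phi ?U"
  proof (rule inj_onI)
    fix a b assume ab: "a \<in> ?U" "b \<in> ?U" "?phi a = ?phi b"
    show "a = b"
    proof (cases "m = 1")
      case True then show ?thesis using ab by auto
    next
      case False
      then have "1 < m" using assms by linarith
      have "a = ?phi a 1" "b = ?phi b 1" using ab(1,2) \<open>1 < m\<close> by auto
      then show ?thesis using ab(3) by metis
    qed
  qed
  have img: "?phi ` ?U = auto (Zm m)"
  proof
    show "?phi ` ?U \<subseteq> auto (Zm m)" using Zm_phi_auto[OF assms] by auto
    show "auto (Zm m) \<subseteq> ?phi ` ?U"
    proof
      fix h assume "h \<in> auto (Zm m)"
      then obtain a where "a < m" "coprime a m" "h = ?phi a" using Zm_auto_char[OF assms] by blast
      then show "h \<in> ?phi ` ?U" by auto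
    qed
  qed
  have "card (auto (Zm m)) = card ?U" using card_image[OF inj] unfolding img .
  also have "card ?U = totient m"
  proof (cases "m = 1")
    case True then show ?thesis by simp
  next
    case False
    then have m1: "m > 1" using assms by linarith
    have "a \<in> ?U \<longleftrightarrow> a \<in> totatives m" for a
      using m1 by (cases "a = 0"; cases "a = m") (auto simp: in_totatives_iff)
    then have "?U = totatives m" by blast
    then show ?thesis by (simp add: totient_def)
  qed
  finally show ?thesis .
qed

lemma geom_aux: "(1 - x) * (\<Sum>k\<le>N. x ^ k) = 1 - (x::real) ^ Suc N"
  using one_diff_power_eq[of x "Suc N"] by (simp add: lessThan_Suc_atMost)

lemma mult_le_self: 
  assumes "prime (p::nat)" "n > 0" shows "multiplicity p n \<le> n"
proof -
  have "p ^ multiplicity p n dvd n" by (rule multiplicity_dvd)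
  then have "p ^ multiplicity p n \<le> n" using assms(2) by (rule dvd_imp_le)
  moreover have "multiplicity p n < 2 ^ multiplicity p n" by (rule less_exp)
  moreover have "2 ^ multiplicity p n \<le> p ^ multiplicity p n"
    using prime_ge_2_nat[OF assms(1)] by (simp add: power_mono)
  ultimately show ?thesis by linarith
qed

lemma harm_le_prod:
  fixes N :: nat
  defines "P \<equiv> {p. prime p \<and> p \<le> N}"
  shows "(harm N :: real) \<le> (\<Prod>p\<in>P. \<Sum>k\<le>N. (1 / real p) ^ k)"
proof -
  have finP: "finite P" unfolding P_def by auto
  define F where "F g = (\<Prod>p\<in>P. (1 / real p) ^ g p)" for g :: "nat \<Rightarrow> nat"
  have eq: "(\<Prod>p\<in>P. \<Sum>k\<le>N. (1 / real p) ^ k) = (\<Sum>g\<in>PiE P (\<lambda>_. {..N}). F g)"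
    unfolding F_def by (rule prod_sum_PiE) (auto simp: finP)
  define h where "h n = restrict (\<lambda>p. multiplicity p n) P" for n
  have hP: "h n \<in> PiE P (\<lambda>_. {..N})" if "n \<in> {1..N}" for n
    using that mult_le_self[of _ n] by (auto simp: h_def P_def intro: order.trans)
  have prodn: "(\<Prod>p\<in>P. p ^ multiplicity p n) = n" if "n \<in> {1..N}" for n
  proof -
    have "(\<Prod>p\<in>P. p ^ multiplicity p n) = (\<Prod>p\<in>prime_factors n. p ^ multiplicity p n)"
    proof (rule prod.mono_neutral_right[OF finP])
      show "prime_factors n \<subseteq> P"
      proof
        fix q assume q: "q \<in> prime_factors n"
        then have "prime q" "q dvd n" by auto
        then have "q \<le> n" using that by (intro dvd_imp_le) auto
        then show "q \<in> P" using that \<open>prime q\<close> by (auto simp: P_def)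
      qed
      show "\<forall>i\<in>P - prime_factors n. i ^ multiplicity i n = 1"
        using that by (auto simp: P_def prime_factors_multiplicity)
    qed
    also have "\<dots> = n" using that by (subst prod_prime_factors) auto
    finally show ?thesis .
  qed
  have inj: "inj_on h {1..N}"
  proof (rule inj_onI)
    fix a b assume ab: "a \<in> {1..N}" "b \<in> {1..N}" "h a = h b"
    have "(\<Prod>p\<in>P. p ^ multiplicity p a) = (\<Prod>p\<in>P. p ^ multiplicity p b)"
      using ab(3) by (intro prod.cong refl) (metis h_def restrict_apply')
    then show "a = b" using prodn ab by simp
  qed
  have Fh: "F (h n) = inverse (real n)" if "n \<in> {1..N}" for n
  proof -
    have "F (h n) = (\<Prod>p\<in>P. 1 / real (p ^ multiplicity p n))"
      unfolding F_def h_def by (intro prod.cong refl) (simp add: power_one_over)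
    also have "\<dots> = 1 / real (\<Prod>p\<in>P. p ^ multiplicity p n)"
      by (simp add: prod_dividef)
    also have "\<dots> = inverse (real n)" using prodn[OF that] by (simp add: divide_inverse)
    finally show ?thesis .
  qed
  have "(harm N :: real) = (\<Sum>n\<in>{1..N}. F (h n))"
    unfolding harm_def by (intro sum.cong refl) (simp add: Fh)
  also have "\<dots> = (\<Sum>g\<in>h ` {1..N}. F g)" by (subst sum.reindex[OF inj]) (simp add: o_def)
  also have "\<dots> \<le> (\<Sum>g\<in>PiE P (\<lambda>_. {..N}). F g)"
  proof (rule sum_mono2)
    show "finite (PiE P (\<lambda>_. {..N}))" by (simp add: finP finite_PiE)
    show "h ` {1..N} \<subseteq> PiE P (\<lambda>_. {..N})" using hP by blast
  qed (auto simp: F_def intro!: prod_nonneg)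
  finally show ?thesis using eq by simp
qed

lemma harm_prod_le_1:
  fixes N :: nat
  shows "(harm N :: real) * (\<Prod>p\<in>{p. prime p \<and> p \<le> N}. 1 - 1 / real p) \<le> 1"
proof -
  let ?P = "{p. prime p \<and> p \<le> N}"
  have pos: "p \<in> ?P \<Longrightarrow> 0 \<le> 1 - 1 / real p" for p
    using prime_ge_2_nat[of p] by auto
  have "(harm N :: real) * (\<Prod>p\<in>?P. 1 - 1 / real p)
      \<le> (\<Prod>p\<in>?P. \<Sum>k\<le>N. (1 / real p) ^ k) * (\<Prod>p\<in>?P. 1 - 1 / real p)"
    by (rule mult_right_mono[OF harm_le_prod]) (use pos in \<open>auto intro: prod_nonneg\<close>)
  also have "\<dots> = (\<Prod>p\<in>?P. (1 - 1 / real p) * (\<Sum>k\<le>N. (1 / real p) ^ k))"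
    by (simp add: prod.distrib mult.commute)
  also have "\<dots> \<le> 1"
  proof (rule prod_le_1)
    fix p assume p: "p \<in> ?P"
    have "(1 - 1 / real p) * (\<Sum>k\<le>N. (1 / real p) ^ k) = 1 - (1 / real p) ^ Suc N"
      by (rule geom_aux)
    moreover have "0 \<le> (1 / real p) ^ Suc N" by simp
    moreover have "(1 / real p) ^ Suc N \<le> 1"
      using p prime_ge_1_nat[of p] by (intro power_le_one) auto
    ultimately show "0 \<le> (1 - 1 / real p) * (\<Sum>k\<le>N. (1 / real p) ^ k) \<and>
      (1 - 1 / real p) * (\<Sum>k\<le>N. (1 / real p) ^ k) \<le> 1"
      by linarith
  qed
  finally show ?thesis .
qed

definition R :: "nat \<Rightarrow> nat \<Rightarrow> real" where
  "R A N = (\<Prod>p\<in>{p. prime p \<and> A < p \<and> p \<le> N}. 1 - 1 / real p)"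

lemma prime_factor_pos: "prime (p::nat) \<Longrightarrow> 0 < 1 - 1 / real p"
  using prime_ge_2_nat[of p] by (simp add: field_simps)

lemma prime_frac: "prime (p::nat) \<Longrightarrow> real (p - 1) / real p = 1 - 1 / real p"
proof -
  assume p: "prime p"
  then have "real (p - 1) = real p - 1" using prime_ge_1_nat[OF p] by (simp add: of_nat_diff)
  moreover have "real p > 0" using prime_gt_0_nat[OF p] by simp
  ultimately show ?thesis by (simp add: diff_divide_distrib)
qed

lemma R_nonneg: "0 \<le> R A N"
  unfolding R_def using prime_ge_2_nat by (auto intro!: prod_nonneg)

lemma R_split:
  assumes "A \<le> N"
  shows "(\<Prod>p\<in>{p. prime p \<and> p \<le> N}. 1 - 1 / real p) =
         (\<Prod>p\<in>{p. prime p \<and> p \<le> A}. 1 - 1 / real p) * R A N"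
proof -
  have "{p. prime p \<and> p \<le> N} = {p. prime p \<and> p \<le> A} \<union> {p. prime p \<and> A < p \<and> p \<le> N}"
    using assms by auto
  then show ?thesis unfolding R_def
    by (simp add: prod.union_disjoint[symmetric] disjoint_iff)
qed

lemma R_small:
  assumes "y > 0"
  shows "\<exists>N. R A N \<le> y"
proof -
  define QA where "QA = (\<Prod>p\<in>{p. prime p \<and> p \<le> A}. 1 - 1 / real p)"
  have QA: "QA > 0" unfolding QA_def
    using prime_factor_pos by (intro prod_pos) auto
  have "eventually (\<lambda>N. (harm N :: real) \<ge> 1 / (QA * y)) sequentially"
    using harm_at_top by (simp add: filterlim_at_top)
  moreover have "eventually (\<lambda>N. N \<ge> A) sequentially" by (rule eventually_ge_at_top)
  ultimately obtain N where N: "(harm N :: real) \<ge> 1 / (QA * y)" "N \<ge> A"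
    using eventually_sequentially by (metis (mono_tags, lifting) eventually_conj_iff eventually_sequentially order_refl)
  have H: "(harm N :: real) * (QA * R A N) \<le> 1"
    using harm_prod_le_1[of N] R_split[OF N(2)] by (simp add: QA_def)
  have Hpos: "(harm N :: real) * QA > 0" using N(1) QA assms
    by (smt (verit) divide_pos_pos mult_pos_pos)
  have "y * (harm N * QA) \<ge> 1" using N(1) QA assms by (simp add: field_simps)
  then have "R A N * (harm N * QA) \<le> y * (harm N * QA)" using H by (simp add: ac_simps)
  then show ?thesis using Hpos by (meson mult_right_le_imp_le)
qed

lemma R_greedy:
  assumes "A > 0" "0 < y" "y \<le> 1"
  shows "\<exists>N. y - 1 / real A < R A N \<and> R A N \<le> y"
proof -
  obtain N0 where "R A N0 \<le> y" using R_small[OF assms(2)] by blast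
  define N where "N = (LEAST N. R A N \<le> y)"
  have RN: "R A N \<le> y" unfolding N_def by (rule LeastI) fact
  show ?thesis
  proof (cases N)
    case 0
    have "{p. prime p \<and> A < p \<and> p \<le> 0} = {}" by auto
    then have "R A N = 1" using 0 by (simp add: R_def)
    then show ?thesis using RN assms by (intro exI[of _ N]) auto
  next
    case (Suc M)
    have RM: "R A M > y" using not_less_Least[of M "\<lambda>N. R A N \<le> y"] Suc
      unfolding N_def by auto
    show ?thesis
    proof (cases "prime (Suc M) \<and> A < Suc M")
      case True
      have "{p. prime p \<and> A < p \<and> p \<le> Suc M} = insert (Suc M) {p. prime p \<and> A < p \<and> p \<le> M}"
        using True by (auto simp: le_Suc_eq)
      then have eq: "R A N = (1 - 1 / real (Suc M)) * R A M" using Suc by (simp add: R_def)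
      have c: "0 \<le> 1 - 1 / real (Suc M)" by (simp add: field_simps)
      have "(1 - 1 / real (Suc M)) * y \<le> (1 - 1 / real (Suc M)) * R A M"
        using RM c by (intro mult_left_mono) auto
      moreover have "y / real (Suc M) \<le> 1 / real (Suc M)" using assms
        by (simp add: divide_right_mono)
      moreover have "1 / real (Suc M) < 1 / real A" using True assms(1)
        by (simp add: frac_less2)
      ultimately have "y - 1 / real A < R A N" unfolding eq by (simp add: algebra_simps)
      then show ?thesis using RN by blast
    next
      case False
      have "{p. prime p \<and> A < p \<and> p \<le> Suc M} = {p. prime p \<and> A < p \<and> p \<le> M}"
        using False by (auto simp: le_Suc_eq)
      then have "R A N = R A M" using Suc by (simp add: R_def)
      then show ?thesis using RM RN by simp
    qed
  qed
qed

lemma prod_primes_in_image: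
  assumes "finite S" "\<And>p. p \<in> S \<Longrightarrow> prime (p::nat)"
  shows "(\<Prod>p\<in>S. 1 - 1 / real p) \<in> aut_ratio_image"
proof -
  define m where "m = \<Prod>S"
  have m0: "m > 0" unfolding m_def using assms(2) prime_gt_0_nat by (simp add: prod_pos)
  have "totient (prod id S) = (\<Prod>p\<in>S. totient (id p))"
  proof (rule totient_prod_coprime)
    show "pairwise coprime (id ` S)" unfolding pairwise_def using assms(2) by (auto intro: primes_coprime_nat)
  qed auto
  then have "totient m = (\<Prod>p\<in>S. totient (id p))" by (simp add: m_def)
  also have "\<dots> = (\<Prod>p\<in>S. p - 1)" using assms(2) by (simp add: totient_prime)
  finally have tm: "totient m = (\<Prod>p\<in>S. p - 1)" .
  have "aut_ratio (Zm m) = real (totient m) / real m"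
    unfolding aut_ratio_def using card_auto_Zm[OF m0] by (simp add: Zm_def)
  also have "\<dots> = real (\<Prod>p\<in>S. p - 1) / real (\<Prod>p\<in>S. p)" unfolding tm by (simp add: m_def)
  also have "\<dots> = (\<Prod>p\<in>S. real (p - 1)) / (\<Prod>p\<in>S. real p)" by (simp only: of_nat_prod)
  also have "\<dots> = (\<Prod>p\<in>S. real (p - 1) / real p)" by (simp add: prod_dividef)
  also have "\<dots> = (\<Prod>p\<in>S. 1 - 1 / real p)"
    using assms(2) by (intro prod.cong refl) (rule prime_frac)
  finally have eq: "aut_ratio (Zm m) = (\<Prod>p\<in>S. 1 - 1 / real p)" .
  have cg: "comm_group (Zm m)" by (rule Zm_comm_group[OF m0])
  have fin: "finite (carrier (Zm m))" unfolding Zm_def by simp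
  show ?thesis unfolding aut_ratio_image_def
    by (intro CollectI exI[of _ "Zm m"] conjI eq[symmetric] cg fin)
qed

theorem lemma2p1:
  shows "{0..1::real} \<subseteq> closure (aut_ratio_image \<inter> {0..1})"
proof
  fix x :: real assume x: "x \<in> {0..1}"
  show "x \<in> closure (aut_ratio_image \<inter> {0..1})"
    unfolding closure_approachable
  proof (intro allI impI)
    fix e :: real assume e: "e > 0"
    obtain A :: nat where A: "A > 0" "inverse (real A) < e / 2"
      using ex_inverse_of_nat_less[of "e/2"] e by auto
    define y where "y = max x (min 1 (e / 2))"
    have y: "0 < y" "y \<le> 1" "x \<le> y" "y \<le> x + e / 2" using x e by (auto simp: y_def)
    obtain N where N: "y - 1 / real A < R A N" "R A N \<le> y"
      using R_greedy[OF A(1) y(1) y(2)] by blast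
    have "R A N \<in> aut_ratio_image" unfolding R_def
      by (rule prod_primes_in_image) auto
    moreover have "R A N \<in> {0..1}" using R_nonneg N y by auto
    moreover have "dist (R A N) x < e"
    proof -
      have "1 / real A < e / 2" using A(2) by (simp add: inverse_eq_divide)
      then show ?thesis unfolding dist_real_def abs_less_iff using N y by (intro conjI; linarith)
    qed
    ultimately show "\<exists>v\<in>aut_ratio_image \<inter> {0..1}. dist v x < e" by blast
  qed
qed

end
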